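(* Let $X(\mathcal{M})$ be the $SL_2(\mathbb{C})$ character variety of $\mathcal{M}$. There is exactly one irreducible component $X_0(\mathcal{M})$ of $X(\mathcal{M})$ containing the character of an irreducible representation. On $X_0(\mathcal{M})$ the functions $s=\operatorname{tr}\rho(\lambda)$ and $t=\operatorname{tr}\rho(\beta)$ are complete coordinates, identifying $X_0(\mathcal{M})$ with the curve in $\mathbb{C}^2$ cut out by $$(-2-3s+s^3)t^4+(4+4s-s^2-s^3)t^2-1=0,\quad\text{equivalently}\quad (s-2)(s+1)^2t^4-(s-2)(s+2)(s+1)t^2-1=0,$$ and this polynomial is irreducible in $\mathbb{C}[s,t]$. Moreover, on $X_0(\mathcal{M})$, $w:=\operatorname{tr}\rho(\lambda\beta)=\operatorname{tr}\rho((\lambda\beta)^{-1})$ satisfies $w=t-\frac{1}{t(s+1)}$.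
   Context: $\mathcal{M}$ is the SnapPy census manifold $m137$ with $\pi_1(\mathcal{M})=\langle \lambda,\beta \mid \beta^{-1}\lambda^{-1}\beta^{-1}\lambda^{-1}\beta^{2}\lambda=\lambda\beta^{-2}\lambda^{-1}\beta^{2}\rangle$, where $\lambda$ is the homological longitude. The $SL_2(\mathbb{C})$ character variety $X(\mathcal{M})$ is the GIT quotient $\operatorname{Hom}(\pi_1(\mathcal{M}),SL_2(\mathbb{C}))/\!/SL_2(\mathbb{C})$, an affine variety whose points are characters $[\rho]$ of representations $\rho$. A representation $\rho$ into $SL_2(\mathbb{C})$ is irreducible if no line in $\mathbb{C}^2$ is invariant under its image (equivalently, it is not conjugate into upper triangular matrices). *)

theory Defs
  imports "HOL-Computational_Algebra.Polynomial_Factorial"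
begin

text \<open>A 2x2 complex matrix [[a,b],[c,d]] is represented by the tuple (a,b,c,d).\<close>
type_synonym m2 = "complex \<times> complex \<times> complex \<times> complex"

definition m2mul :: "m2 \<Rightarrow> m2 \<Rightarrow> m2" where
  "m2mul M N = (case M of (a,b,c,d) \<Rightarrow> case N of (e,f,g,h) \<Rightarrow>
      (a*e + b*g, a*f + b*h, c*e + d*g, c*f + d*h))"

definition m2id :: m2 where "m2id = (1,0,0,1)"

definition m2det :: "m2 \<Rightarrow> complex" where
  "m2det M = (case M of (a,b,c,d) \<Rightarrow> a*d - b*c)"

definition m2tr :: "m2 \<Rightarrow> complex" where
  "m2tr M = (case M of (a,b,c,d) \<Rightarrow> a + d)"

definition m2inv :: "m2 \<Rightarrow> m2" where
  "m2inv M = (case M of (a,b,c,d) \<Rightarrow>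
     (d / m2det M, - b / m2det M, - c / m2det M, a / m2det M))"

definition m2app :: "m2 \<Rightarrow> complex \<times> complex \<Rightarrow> complex \<times> complex" where
  "m2app M v = (case M of (a,b,c,d) \<Rightarrow> case v of (x,y) \<Rightarrow> (a*x + b*y, c*x + d*y))"

definition m2prod :: "m2 list \<Rightarrow> m2" where
  "m2prod xs = foldr m2mul xs m2id"

text \<open>A representation rho is determined by L = rho(lambda), B = rho(beta) in SL_2(C)
  satisfying the defining relation
  beta^-1 lambda^-1 beta^-1 lambda^-1 beta^2 lambda = lambda beta^-2 lambda^-1 beta^2.\<close>
definition is_rep :: "m2 \<Rightarrow> m2 \<Rightarrow> bool" where
  "is_rep L B \<longleftrightarrow> m2det L = 1 \<and> m2det B = 1 \<and>
     m2prod [m2inv B, m2inv L, m2inv B, m2inv L, B, B, L]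
       = m2prod [L, m2inv B, m2inv B, m2inv L, B, B]"

inductive_set rep_image :: "m2 \<Rightarrow> m2 \<Rightarrow> m2 set" for L B where
  ri_id: "m2id \<in> rep_image L B"
| ri_L: "L \<in> rep_image L B"
| ri_B: "B \<in> rep_image L B"
| ri_mul: "M \<in> rep_image L B \<Longrightarrow> N \<in> rep_image L B \<Longrightarrow> m2mul M N \<in> rep_image L B"
| ri_inv: "M \<in> rep_image L B \<Longrightarrow> m2inv M \<in> rep_image L B"

definition irred_rep :: "m2 \<Rightarrow> m2 \<Rightarrow> bool" where
  "irred_rep L B \<longleftrightarrow> \<not> (\<exists>v. v \<noteq> (0,0) \<and>
     (\<forall>M \<in> rep_image L B. \<exists>c. m2app M v = (c * fst v, c * snd v)))"

definition char :: "m2 \<Rightarrow> m2 \<Rightarrow> complex \<times> complex \<times> complex" where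
  "char L B = (m2tr L, m2tr B, m2tr (m2mul L B))"

definition charvar :: "(complex \<times> complex \<times> complex) set" where
  "charvar = {char L B | L B. is_rep L B}"

inductive pf3 :: "(complex \<times> complex \<times> complex \<Rightarrow> complex) \<Rightarrow> bool" where
  pf3_const: "pf3 (\<lambda>_. c)"
| pf3_x: "pf3 (\<lambda>(x,y,z). x)"
| pf3_y: "pf3 (\<lambda>(x,y,z). y)"
| pf3_z: "pf3 (\<lambda>(x,y,z). z)"
| pf3_add: "pf3 f \<Longrightarrow> pf3 g \<Longrightarrow> pf3 (\<lambda>p. f p + g p)"
| pf3_mul: "pf3 f \<Longrightarrow> pf3 g \<Longrightarrow> pf3 (\<lambda>p. f p * g p)"

definition zclosed3 :: "(complex \<times> complex \<times> complex) set \<Rightarrow> bool" where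
  "zclosed3 S \<longleftrightarrow> (\<exists>F. (\<forall>f\<in>F. pf3 f) \<and> S = {p. \<forall>f\<in>F. f p = 0})"

definition zirr3 :: "(complex \<times> complex \<times> complex) set \<Rightarrow> bool" where
  "zirr3 S \<longleftrightarrow> S \<noteq> {} \<and> zclosed3 S \<and>
     (\<forall>A B. zclosed3 A \<longrightarrow> zclosed3 B \<longrightarrow> S \<subseteq> A \<union> B \<longrightarrow> S \<subseteq> A \<or> S \<subseteq> B)"

definition irr_comp3 :: "(complex \<times> complex \<times> complex) set \<Rightarrow> (complex \<times> complex \<times> complex) set \<Rightarrow> bool" where
  "irr_comp3 X Y \<longleftrightarrow> Y \<subseteq> X \<and> zirr3 Y \<and> (\<forall>Z. Z \<subseteq> X \<longrightarrow> zirr3 Z \<longrightarrow> Y \<subseteq> Z \<longrightarrow> Z = Y)"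

text \<open>Bivariate polynomials: outer variable t, coefficients in C[s].\<close>
definition m137_poly :: "complex poly poly" where
  "m137_poly = [: [:-1:], 0, [:4, 4, -1, -1:], 0, [:-2, -3, 0, 1:] :]"

definition m137_poly_alt :: "complex poly poly" where
  "m137_poly_alt = (let S = [:[:0, 1:]:]; T = [:0, 1:] in
     (S - 2) * (S + 1)^2 * T^4 - (S - 2) * (S + 2) * (S + 1) * T^2 - 1)"

definition peval2 :: "complex poly poly \<Rightarrow> complex \<Rightarrow> complex \<Rightarrow> complex" where
  "peval2 P s t = poly (map_poly (\<lambda>c. poly c s) P) t"

end

theory Submission
  imports Defs "HOL-Computational_Algebra.Field_as_Ring"
begin


lemma peval2_alt: "peval2 P s t = poly (poly P [:t:]) s"
  unfolding peval2_def
  by (induct P) (auto simp: map_poly_pCons)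

definition Pv :: "complex \<Rightarrow> complex \<Rightarrow> complex" where
  "Pv s t = (s-2)*(s+1)^2*t^4 - (s-2)*(s+2)*(s+1)*t^2 - 1"

lemma peval2_m137: "peval2 m137_poly s t = Pv s t"
  unfolding peval2_alt m137_poly_def Pv_def
  by (simp add: algebra_simps power2_eq_square power4_eq_xxxx)


lemma poly_eq_alt: "m137_poly = m137_poly_alt"
proof -
  have S2: "[:[:0, 1:]:] - (2::complex poly poly) = [:[:-2,1:]:]" by (simp add: numeral_poly)
  have S1: "[:[:0, 1:]:] + (1::complex poly poly) = [:[:1,1:]:]" by (simp add: one_pCons)
  have S3: "[:[:0, 1:]:] + (2::complex poly poly) = [:[:2,1:]:]" by (simp add: numeral_poly)
  have T2: "[:0, 1:]^2 = ([:0,0,1:] :: complex poly poly)" by (simp add: power2_eq_square one_pCons)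
  have T4: "[:0, 1:]^4 = ([:0,0,0,0,1:] :: complex poly poly)" by (simp add: power4_eq_xxxx one_pCons)
  have a: "[:[:-2,1:]:] * [:[:1,1:]:]^2 * [:0,0,0,0,1:] = ([:0,0,0,0,[:-2, -3, 0, 1:]:] :: complex poly poly)"
    by (simp add: power2_eq_square)
  have b: "[:[:-2,1:]:] * [:[:2,1:]:] * [:[:1,1:]:] * [:0,0,1:] = ([:0,0,[:-4, -4, 1, 1:]:] :: complex poly poly)"
    by (simp add: power2_eq_square)
  show ?thesis
    unfolding m137_poly_def m137_poly_alt_def Let_def S1 S2 S3 T2 T4 a b
    by (simp add: one_pCons)
qed



abbreviation "Ac \<equiv> [:-2, -3, 0, 1:] :: complex poly"
abbreviation "Cc \<equiv> [:4, 4, -1, -1:] :: complex poly"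

lemma simple_root2:
  fixes X E h Z :: "complex poly"
  assumes "X = [:-2,1:] * E" "poly E 2 \<noteq> 0" "X = h^2 * Z" "poly h 2 = 0"
  shows False
proof -
  from assms(4) have "[:-2,1:] dvd h" using poly_eq_0_iff_dvd[of h 2] by simp
  then obtain k where k: "h = [:-2,1:] * k" by (auto elim: dvdE)
  have gen: "\<And>q::complex poly. X = q*E \<Longrightarrow> X = h^2*Z \<Longrightarrow> h = q*k \<Longrightarrow> q*E = q*(q*k^2*Z)"
    by algebra
  have "[:-2,1:] * E = [:-2,1:] * ([:-2,1:] * k^2 * Z)"
    by (rule gen[OF assms(1,3) k])
  moreover have nz: "[:-2,1:] \<noteq> (0::complex poly)" by simp
  ultimately have "E = [:-2,1:] * k^2 * Z" using mult_left_cancel[OF nz] by blast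
  then have "poly E 2 = 0" by simp
  with assms(2) show False by simp
qed

lemma coeffs_P:
  "coeff m137_poly 0 = [:-1:]" "coeff m137_poly 1 = 0" "coeff m137_poly 2 = Cc"
  "coeff m137_poly 3 = 0" "coeff m137_poly 4 = Ac" "degree m137_poly = 4"
  by (simp_all add: m137_poly_def numeral_eq_Suc)

lemma irr_aux:
  fixes F G :: "complex poly poly"
  assumes PFG: "m137_poly = F * G" and dF: "degree F \<le> 2"
  shows "is_unit F \<or> is_unit G"
proof -
  have F0: "F \<noteq> 0" and G0: "G \<noteq> 0" using PFG by (auto simp: m137_poly_def)
  have dsum: "degree F + degree G = 4" using PFG degree_mult_eq[OF F0 G0] coeffs_P(6) by simp
  define f where "f = coeff F" define g where "g = coeff G"
  have e: "coeff m137_poly n = (\<Sum>i\<le>n. f i * g (n-i))" for n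
    unfolding PFG f_def g_def by (rule coeff_mult)
  have fz: "f i = 0" if "i > degree F" for i using that f_def coeff_eq_0 by auto
  have gz: "g i = 0" if "i > degree G" for i using that g_def coeff_eq_0 by auto
  have e0: "f 0 * g 0 = [:-1:]" using e[of 0] coeffs_P by simp
  have e1: "f 0 * g 1 + f 1 * g 0 = 0" using e[of 1] coeffs_P by (simp add: numeral_eq_Suc)
  have e2: "f 0 * g 2 + f 1 * g 1 + f 2 * g 0 = Cc" using e[of 2] coeffs_P by (simp add: numeral_eq_Suc)
  have e3: "f 0 * g 3 + f 1 * g 2 + f 2 * g 1 + f 3 * g 0 = 0" using e[of 3] coeffs_P by (simp add: numeral_eq_Suc)
  have e4: "f 0 * g 4 + f 1 * g 3 + f 2 * g 2 + f 3 * g 1 + f 4 * g 0 = Ac" using e[of 4] coeffs_P by (simp add: numeral_eq_Suc)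
  have m1: "[:-1:] = (-1 :: complex poly)" by (simp add: one_pCons)
  have A_fac: "Ac = [:-2,1:] * [:1,2,1:]" by simp
  consider "degree F = 0" | "degree F = 1" | "degree F = 2" using dF by linarith
  then show ?thesis
  proof cases
    case 1
    then have "F = [:f 0:]" unfolding f_def by (metis degree_eq_zeroE coeff_pCons_0)
    moreover have "f 0 dvd 1" proof (rule dvdI)
      show "1 = f 0 * (- g 0)" using e0 unfolding m1 by simp
    qed
    ultimately show ?thesis using is_unit_const_poly_iff by auto
  next
    case 2
    then have dG: "degree G = 3" using dsum by simp
    have [simp]: "f 2 = 0" "f 3 = 0" "f 4 = 0" "g 4 = 0" using fz gz 2 dG by auto
    define m where "m = f 1 * g 0"
    have key: "Ac = m^2 * (m^2 - Cc)"
      using e0 e1 e2 e3 e4 unfolding m_def m1 by simp algebra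
    have "poly m 2 ^ 4 = 0"
      using arg_cong[OF key, of "\<lambda>p. poly p 2"] by (simp add: power2_eq_square power4_eq_xxxx)
    then have "poly m 2 = 0" by simp
    from simple_root2[OF A_fac _ key this] show ?thesis by simp
  next
    case 3
    then have dG: "degree G = 2" using dsum by simp
    have [simp]: "f 3 = 0" "f 4 = 0" "g 3 = 0" "g 4 = 0" using fz gz 3 dG by auto
    show ?thesis
    proof (cases "f 1 = 0")
      case True
      define h where "h = f 2 * g 0 - f 0 * g 2"
      have gen: "\<And>A C f0 f2 g0 g1 g2::complex poly. f0*g0 = -1 \<Longrightarrow> f0*g1 = 0 \<Longrightarrow>
         f0*g2 + f2*g0 = C \<Longrightarrow> f2*g2 = A \<Longrightarrow> C^2 + 4*A = (f2*g0 - f0*g2)^2 * 1"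
        by algebra
      have key: "Cc^2 + 4 * Ac = h^2 * 1" unfolding h_def
        apply (rule gen)
        using e0 e1 e2 e4 True unfolding m1 by (simp_all only: mult_zero_left mult_zero_right add_0_right add_0_left \<open>f 3 = 0\<close> \<open>f 4 = 0\<close> \<open>g 3 = 0\<close> \<open>g 4 = 0\<close>)
      have D_fac: "Cc^2 + 4 * Ac = [:-2,1:] * ([:1,2,1:] * [:-4,-4,2,1:])"
        by (simp add: power2_eq_square numeral_poly)
      have "poly h 2 ^ 2 = 0"
        using arg_cong[OF key, of "\<lambda>p. poly p 2"] by (simp add: power2_eq_square)
      then have "poly h 2 = 0" by simp
      from simple_root2[OF D_fac _ key this] show ?thesis by simp
    next
      case False
      have g1: "g 1 = f 1 * g 0 ^ 2" using e0 e1 unfolding m1 by algebra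
      have "f 1 * (g 2 + f 2 * g 0 ^ 2) = 0" using e3 g1 by (simp add: algebra_simps power2_eq_square)
      then have "g 2 + f 2 * g 0 ^ 2 = 0" using False by simp
      then have g2: "g 2 = - f 2 * g 0 ^ 2" by (simp add: eq_neg_iff_add_eq_0)
      define h where "h = f 2 * g 0"
      have key: "Ac = h^2 * (-1)" using e4 g2 unfolding h_def by (simp add: algebra_simps power2_eq_square)
      have "poly h 2 ^ 2 = 0"
        using arg_cong[OF key, of "\<lambda>p. poly p 2"] by (simp add: power2_eq_square)
      then have "poly h 2 = 0" by simp
      from simple_root2[OF A_fac _ key this] show ?thesis by simp
    qed
  qed
qed

lemma irreducible_P: "irreducible m137_poly"
proof (rule irreducibleI)
  show "m137_poly \<noteq> 0" by (simp add: m137_poly_def)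
  show "\<not> m137_poly dvd 1"
  proof
    assume "m137_poly dvd 1"
    then obtain q where "1 = m137_poly * q" by (auto elim: dvdE)
    then have "degree (1::complex poly poly) = degree m137_poly + degree q"
      by (metis degree_mult_eq mult_zero_right one_neq_zero \<open>m137_poly \<noteq> 0\<close>)
    then show False using coeffs_P(6) by simp
  qed
  fix a b assume ab: "m137_poly = a * b"
  have "a \<noteq> 0" "b \<noteq> 0" using ab \<open>m137_poly \<noteq> 0\<close> by auto
  then have "degree a + degree b = 4" using ab degree_mult_eq coeffs_P(6) by metis
  then consider "degree a \<le> 2" | "degree b \<le> 2" by linarith
  then show "a dvd 1 \<or> b dvd 1"
  proof cases
    case 1 then show ?thesis using irr_aux[OF ab] by blast
  next
    case 2 then show ?thesis using irr_aux[of b a] ab by (auto simp: mult.commute)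
  qed
qed


lemma prime_P: "prime_elem m137_poly"
  using irreducible_P prime_elem_iff_irreducible by blast

lemma Pv_AC: "Pv s t = poly Ac s * t^4 + poly Cc s * t^2 - 1"
  unfolding Pv_def by (simp add: algebra_simps power2_eq_square power3_eq_cube)

lemma poly_zero_cofinite:
  fixes p :: "complex poly"
  assumes "finite B" "\<And>s. s \<notin> B \<Longrightarrow> poly p s = 0"
  shows "p = 0"
proof (rule ccontr)
  assume "p \<noteq> 0"
  then have "finite {s. poly p s = 0}" by (rule poly_roots_finite)
  moreover have "UNIV \<subseteq> B \<union> {s. poly p s = 0}" using assms(2) by auto
  ultimately have "finite (UNIV :: complex set)" using assms(1) by (meson finite_Un finite_subset)
  then show False using infinite_UNIV_char_0 by blast
qed

lemma cubic_zero:
  fixes A0 C0 c0 c1 c2 c3 :: complex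
  assumes A0: "A0 \<noteq> 0" and D0: "C0^2 + 4*A0 \<noteq> 0"
    and van: "\<And>t. A0*t^4 + C0*t^2 - 1 = 0 \<Longrightarrow> c0 + t*(c1 + t*(c2 + t*c3)) = 0"
  shows "c0 = 0 \<and> c1 = 0 \<and> c2 = 0 \<and> c3 = 0"
proof -
  define d where "d = csqrt (C0^2 + 4*A0)"
  have dd: "d^2 = C0^2 + 4*A0" unfolding d_def by simp
  have dnz: "d \<noteq> 0" using dd D0 by auto
  have step: "c0 + c2*u = 0 \<and> c1 + c3*u = 0" if u: "A0*u^2 + C0*u - 1 = 0" for u
  proof -
    define t where "t = csqrt u"
    have tt: "t^2 = u" unfolding t_def by simp
    have "u \<noteq> 0" using u by auto
    then have tnz: "t \<noteq> 0" using tt by auto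
    have r1: "A0*t^4 + C0*t^2 - 1 = 0" using u tt by algebra
    have r2: "A0*(-t)^4 + C0*(-t)^2 - 1 = 0" using r1 by simp
    have a: "c0 + t*(c1 + t*(c2 + t*c3)) = 0" using van[OF r1] .
    have b: "c0 + (-t)*(c1 + (-t)*(c2 + (-t)*c3)) = 0" using van[OF r2] .
    have "t*(c1 + c3*u) = 0" using a b tt by algebra
    then have e1: "c1 + c3*u = 0" using tnz by simp
    have e2: "c0 + c2*u = 0" using a b tt by algebra
    show ?thesis using e1 e2 by simp
  qed
  define u1 where "u1 = (-C0 + d)/(2*A0)"
  define u2 where "u2 = (-C0 - d)/(2*A0)"
  have l1: "2*A0*u1 = -C0 + d" unfolding u1_def using A0 by simp
  have l2: "2*A0*u2 = -C0 - d" unfolding u2_def using A0 by simp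
  have "4*A0*(A0*u1^2 + C0*u1 - 1) = 0" using l1 dd by algebra
  then have q1: "A0*u1^2 + C0*u1 - 1 = 0" using A0 by simp
  have "4*A0*(A0*u2^2 + C0*u2 - 1) = 0" using l2 dd by algebra
  then have q2: "A0*u2^2 + C0*u2 - 1 = 0" using A0 by simp
  have "2*A0*(u1 - u2) = 2*d" using l1 l2 by algebra
  then have ne: "u1 - u2 \<noteq> 0" using dnz by auto
  have s1: "c0 + c2*u1 = 0" "c1 + c3*u1 = 0" using step[OF q1] by auto
  have s2: "c0 + c2*u2 = 0" "c1 + c3*u2 = 0" using step[OF q2] by auto
  have "c2*(u1 - u2) = 0" using s1 s2 by algebra
  then have c2: "c2 = 0" using ne by simp
  have "c3*(u1 - u2) = 0" using s1 s2 by algebra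
  then have c3: "c3 = 0" using ne by simp
  show ?thesis using c2 c3 s1 by simp
qed


lemma peval2_add[simp]: "peval2 (p + q) s t = peval2 p s t + peval2 q s t"
  by (simp add: peval2_alt)
lemma peval2_diff[simp]: "peval2 (p - q) s t = peval2 p s t - peval2 q s t"
  by (simp add: peval2_alt)
lemma peval2_mult[simp]: "peval2 (p * q) s t = peval2 p s t * peval2 q s t"
  by (simp add: peval2_alt)
lemma peval2_smult[simp]: "peval2 (smult a p) s t = poly a s * peval2 p s t"
  by (simp add: peval2_alt)

lemma deg3_expand:
  fixes r :: "complex poly poly"
  assumes "degree r \<le> 3"
  shows "r = [:coeff r 0, coeff r 1, coeff r 2, coeff r 3:]"
proof (rule poly_eqI)
  fix n
  show "coeff r n = coeff [:coeff r 0, coeff r 1, coeff r 2, coeff r 3:] n"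
  proof (cases "n \<ge> 4")
    case True
    then obtain m where m: "n = 4 + m" using le_Suc_ex by blast
    have "coeff r n = 0" using assms True by (intro coeff_eq_0) simp
    then show ?thesis using m by (simp add: numeral_eq_Suc)
  next
    case False
    then consider "n = 0" | "n = 1" | "n = 2" | "n = 3" by linarith
    then show ?thesis by cases (simp_all add: numeral_eq_Suc)
  qed
qed

lemma deg3_vanish:
  fixes r :: "complex poly poly"
  assumes deg: "degree r \<le> 3" and van: "\<forall>s t. Pv s t = 0 \<longrightarrow> peval2 r s t = 0"
  shows "r = 0"
proof -
  have rexp: "peval2 r s t = poly (coeff r 0) s + t*(poly (coeff r 1) s + t*(poly (coeff r 2) s + t*poly (coeff r 3) s))" for s t
    by (subst deg3_expand[OF deg]) (simp add: peval2_alt)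
  define Bad where "Bad = {s. poly Ac s = 0} \<union> {s. poly (Cc^2 + 4*Ac) s = 0}"
  have nzD: "Cc^2 + 4*Ac \<noteq> 0"
  proof
    assume "Cc^2 + 4*Ac = 0"
    then have "poly (Cc^2 + 4*Ac) 0 = 0" by simp
    then show False by (simp add: power2_eq_square)
  qed
  have nzA: "Ac \<noteq> 0" by simp
  have finB: "finite Bad" unfolding Bad_def using poly_roots_finite[OF nzA] poly_roots_finite[OF nzD] by simp
  have good: "poly (coeff r 0) s = 0 \<and> poly (coeff r 1) s = 0 \<and> poly (coeff r 2) s = 0 \<and> poly (coeff r 3) s = 0"
    if "s \<notin> Bad" for s
  proof (rule cubic_zero)
    show "poly Ac s \<noteq> 0" using that Bad_def by auto
    have neq: "poly (Cc^2 + 4*Ac) s \<noteq> 0" using that Bad_def by blast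
    have eqX: "poly (Cc^2 + 4*Ac) s = (poly Cc s)^2 + 4 * poly Ac s"
      by (simp only: poly_add poly_power poly_mult poly_numeral)
    show "(poly Cc s)^2 + 4 * poly Ac s \<noteq> 0" using neq unfolding eqX .
    fix t assume "poly Ac s * t ^ 4 + poly Cc s * t\<^sup>2 - 1 = 0"
    then have "Pv s t = 0" by (simp add: Pv_AC)
    then show "poly (coeff r 0) s + t * (poly (coeff r 1) s + t * (poly (coeff r 2) s + t * poly (coeff r 3) s)) = 0"
      using van rexp by simp
  qed
  have "coeff r 0 = 0" by (rule poly_zero_cofinite[OF finB]) (use good in blast)
  moreover have "coeff r 1 = 0" by (rule poly_zero_cofinite[OF finB]) (use good in blast)
  moreover have "coeff r 2 = 0" by (rule poly_zero_cofinite[OF finB]) (use good in blast)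
  moreover have "coeff r 3 = 0" by (rule poly_zero_cofinite[OF finB]) (use good in blast)
  ultimately show "r = 0" by (subst deg3_expand[OF deg]) simp
qed

lemma vanish_dvd:
  fixes h :: "complex poly poly"
  assumes van: "\<forall>s t. Pv s t = 0 \<longrightarrow> peval2 h s t = 0"
  shows "m137_poly dvd h"
proof -
  have P0: "m137_poly \<noteq> 0" by (simp add: m137_poly_def)
  define r where "r = pseudo_mod h m137_poly"
  obtain a q where a: "a \<noteq> 0" and eq: "smult a h = m137_poly * q + r"
    using pseudo_mod(1)[OF P0, of h] unfolding r_def by blast
  have dr: "r = 0 \<or> degree r < 4" using pseudo_mod(2)[OF P0, of h] coeffs_P(6) unfolding r_def by simp
  have req: "r = smult a h - m137_poly * q" using eq by simp
  have vr: "\<forall>s t. Pv s t = 0 \<longrightarrow> peval2 r s t = 0"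
    using van unfolding req by (simp add: peval2_m137)
  have "r = 0"
  proof (cases "r = 0")
    case False
    then have "degree r \<le> 3" using dr by simp
    then show ?thesis using deg3_vanish vr by blast
  qed simp
  then have "m137_poly dvd [:a:] * h" using eq by simp
  then have "m137_poly dvd [:a:] \<or> m137_poly dvd h" using prime_P prime_elem_dvd_mult_iff by blast
  moreover have "\<not> m137_poly dvd [:a:]"
  proof
    assume "m137_poly dvd [:a:]"
    then have "degree m137_poly \<le> degree [:a:]" using a by (intro dvd_imp_degree_le) auto
    then show False using coeffs_P(6) by simp
  qed
  ultimately show ?thesis by blast
qed


definition phi :: "complex \<Rightarrow> complex \<Rightarrow> complex" where
  "phi s t = t - t*(s-2)*((s+1)*t^2-(s+2))"

definition X0set :: "(complex \<times> complex \<times> complex) set" where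
  "X0set = {(s,t,w). Pv s t = 0 \<and> w = phi s t}"

definition Rset :: "(complex \<times> complex \<times> complex) set" where
  "Rset = {(s,t,w). s = 2 \<and> w = t}"

lemma pf3_fst: "pf3 fst"
proof -
  have "(\<lambda>(x::complex,y::complex,z::complex). x) = fst" by auto
  then show ?thesis using pf3_x by metis
qed
lemma pf3_fst2: "pf3 (\<lambda>p. fst (snd p))"
proof -
  have "(\<lambda>(x::complex,y::complex,z::complex). y) = (\<lambda>p. fst (snd p))" by auto
  then show ?thesis using pf3_y by metis
qed
lemma pf3_snd2: "pf3 (\<lambda>p. snd (snd p))"
proof -
  have "(\<lambda>(x::complex,y::complex,z::complex). z) = (\<lambda>p. snd (snd p))" by auto
  then show ?thesis using pf3_z by metis
qed
lemma pf3_diff: "pf3 f \<Longrightarrow> pf3 g \<Longrightarrow> pf3 (\<lambda>p. f p - g p)"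
proof -
  assume "pf3 f" "pf3 g"
  then have "pf3 (\<lambda>p. f p + (\<lambda>q. (\<lambda>_. -1) q * g q) p)"
    by (intro pf3_add pf3_mul pf3_const)
  then show ?thesis by simp
qed
lemma pf3_pow: "pf3 f \<Longrightarrow> pf3 (\<lambda>p. f p ^ n)"
proof (induct n)
  case 0 then show ?case using pf3_const[of 1] by simp
next
  case (Suc n)
  then have "pf3 (\<lambda>p. f p * f p ^ n)" by (intro pf3_mul)
  then show ?case by simp
qed

lemmas pf3_intros = pf3_diff pf3_add pf3_mul pf3_pow pf3_fst pf3_fst2 pf3_snd2 pf3_const

lemma pf3_rep: "pf3 f \<Longrightarrow> \<exists>Q. \<forall>s t. f (s,t,phi s t) = peval2 Q s t"
proof (induct rule: pf3.induct)
  case (pf3_const c)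
  show ?case by (rule exI[of _ "[:[:c:]:]"]) (simp add: peval2_alt)
next
  case pf3_x
  show ?case by (rule exI[of _ "[:[:0,1:]:]"]) (simp add: peval2_alt)
next
  case pf3_y
  show ?case by (rule exI[of _ "[:0,1:]"]) (simp add: peval2_alt)
next
  case pf3_z
  let ?X = "[:[:0,1:]:] :: complex poly poly" and ?Y = "[:0,1:] :: complex poly poly"
  show ?case by (rule exI[of _ "?Y - ?Y*(?X-2)*((?X+1)*?Y^2 - (?X+2))"]) (auto simp: peval2_alt phi_def algebra_simps)
next
  case (pf3_add f g)
  then obtain Q1 Q2 where "\<forall>s t. f (s,t,phi s t) = peval2 Q1 s t" "\<forall>s t. g (s,t,phi s t) = peval2 Q2 s t" by blast
  then show ?case by (intro exI[of _ "Q1 + Q2"]) simp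
next
  case (pf3_mul f g)
  then obtain Q1 Q2 where "\<forall>s t. f (s,t,phi s t) = peval2 Q1 s t" "\<forall>s t. g (s,t,phi s t) = peval2 Q2 s t" by blast
  then show ?case by (intro exI[of _ "Q1 * Q2"]) simp
qed

lemma pf3_Pv: "pf3 (\<lambda>p. Pv (fst p) (fst (snd p)))"
  unfolding Pv_def by (intro pf3_intros)
lemma pf3_phi: "pf3 (\<lambda>p. snd (snd p) - phi (fst p) (fst (snd p)))"
  unfolding phi_def by (intro pf3_intros)
lemma pf3_R1: "pf3 (\<lambda>p. fst p - 2)"
  by (intro pf3_intros)
lemma pf3_R2: "pf3 (\<lambda>p. snd (snd p) - fst (snd p))"
  by (intro pf3_intros)

lemma zclosed_X0: "zclosed3 X0set"
  unfolding zclosed3_def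
proof (intro exI conjI)
  let ?F = "{\<lambda>p. Pv (fst p) (fst (snd p)), \<lambda>p. snd (snd p) - phi (fst p) (fst (snd p))}"
  show "\<forall>f\<in>?F. pf3 f"
    using pf3_Pv pf3_phi by blast
  show "X0set = {p. \<forall>f\<in>?F. f p = 0}"
    unfolding X0set_def by auto
qed

lemma zclosed_R: "zclosed3 Rset"
  unfolding zclosed3_def
proof (intro exI conjI)
  let ?F = "{\<lambda>p. fst p - 2, \<lambda>p. snd (snd p) - fst (snd p)}"
  show "\<forall>f\<in>?F. pf3 f"
    using pf3_R1 pf3_R2 by blast
  show "Rset = {p. \<forall>f\<in>?F. f p = 0}"
    unfolding Rset_def by auto
qed

definition t0 :: complex where "t0 = (1 + \<i>)/2"

lemma Pv_t0: "Pv (-2) t0 = 0"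
proof -
  have h: "t0^2 = \<i>/2" unfolding t0_def by (simp add: power2_eq_square field_simps)
  have "t0^4 = t0^2 * t0^2" by (simp add: power4_eq_xxxx power2_eq_square)
  also have "... = (\<i>/2) * (\<i>/2)" by (simp only: h)
  also have "... = -1/4" by simp
  finally have "t0^4 = -1/4" .
  then show ?thesis unfolding Pv_def by simp
qed

lemma X0_ne: "(-2, t0, phi (-2) t0) \<in> X0set"
  unfolding X0set_def using Pv_t0 by simp

lemma zirr_X0: "zirr3 X0set"
  unfolding zirr3_def
proof (intro conjI allI impI)
  show "X0set \<noteq> {}" using X0_ne by blast
  show "zclosed3 X0set" by (rule zclosed_X0)
  fix A B assume zA: "zclosed3 A" and zB: "zclosed3 B" and sub: "X0set \<subseteq> A \<union> B"
  show "X0set \<subseteq> A \<or> X0set \<subseteq> B"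
  proof (rule ccontr)
    assume "\<not> (X0set \<subseteq> A \<or> X0set \<subseteq> B)"
    then obtain p1 p2 where p1: "p1 \<in> X0set" "p1 \<notin> A" and p2: "p2 \<in> X0set" "p2 \<notin> B" by blast
    obtain FA where FA: "\<forall>f\<in>FA. pf3 f" "A = {p. \<forall>f\<in>FA. f p = 0}"
      using zA unfolding zclosed3_def by (elim exE conjE)
    obtain FB where FB: "\<forall>f\<in>FB. pf3 f" "B = {p. \<forall>f\<in>FB. f p = 0}"
      using zB unfolding zclosed3_def by (elim exE conjE)
    have "\<not> (\<forall>f\<in>FA. f p1 = 0)" using p1(2) FA(2) by simp
    then obtain f where f: "f \<in> FA" "f p1 \<noteq> 0" by blast
    have "\<not> (\<forall>f\<in>FB. f p2 = 0)" using p2(2) FB(2) by simp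
    then obtain g where g: "g \<in> FB" "g p2 \<noteq> 0" by blast
    have "pf3 f" using f(1) FA(1) by blast
    then obtain Qf where Qf: "\<forall>s t. f (s,t,phi s t) = peval2 Qf s t" using pf3_rep by blast
    have "pf3 g" using g(1) FB(1) by blast
    then obtain Qg where Qg: "\<forall>s t. g (s,t,phi s t) = peval2 Qg s t" using pf3_rep by blast
    have "\<forall>s t. Pv s t = 0 \<longrightarrow> peval2 (Qf * Qg) s t = 0"
    proof (intro allI impI)
      fix s t assume "Pv s t = 0"
      then have "(s,t,phi s t) \<in> X0set" by (simp add: X0set_def)
      then have "(s,t,phi s t) \<in> A \<union> B" using sub by blast
      then have "(\<forall>f\<in>FA. f (s,t,phi s t) = 0) \<or> (\<forall>f\<in>FB. f (s,t,phi s t) = 0)"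
        using FA(2) FB(2) by simp
      then have "f (s,t,phi s t) = 0 \<or> g (s,t,phi s t) = 0" using f(1) g(1) by blast
      then show "peval2 (Qf * Qg) s t = 0" using Qf Qg by (metis mult_eq_0_iff peval2_mult)
    qed
    then have "m137_poly dvd Qf * Qg" by (rule vanish_dvd)
    then have "m137_poly dvd Qf \<or> m137_poly dvd Qg" using prime_P prime_elem_dvd_mult_iff by blast
    then show False
    proof
      assume "m137_poly dvd Qf"
      then obtain K where K: "Qf = m137_poly * K" by (auto elim: dvdE)
      obtain s t w where sw: "p1 = (s,t,w)" by (cases p1) auto
      then have "Pv s t = 0 \<and> w = phi s t" using p1(1) unfolding X0set_def by simp
      then have "f p1 = 0" using Qf K sw by (simp add: peval2_m137)
      then show False using f by simp
    next
      assume "m137_poly dvd Qg"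
      then obtain K where K: "Qg = m137_poly * K" by (auto elim: dvdE)
      obtain s t w where sw: "p2 = (s,t,w)" by (cases p2) auto
      then have "Pv s t = 0 \<and> w = phi s t" using p2(1) unfolding X0set_def by simp
      then have "g p2 = 0" using Qg K sw by (simp add: peval2_m137)
      then show False using g by simp
    qed
  qed
qed


lemma tr_I:
  fixes a b c d e f g h :: complex
  assumes "a*d - b*c = 1" "e*h - f*g = 1"
  defines "x \<equiv> a+d" and "y \<equiv> e+h" and "z \<equiv> a*e+b*g+c*f+d*h"
  shows "m2tr (m2prod [(h,-f,-g,e),(d,-b,-c,a),(h,-f,-g,e),(d,-b,-c,a),(e,f,g,h),(e,f,g,h),(a,b,c,d)]) - m2tr (m2prod [(a,b,c,d),(h,-f,-g,e),(h,-f,-g,e),(d,-b,-c,a),(e,f,g,h),(e,f,g,h)]) = (-1)*x^2*y^2 + 1*x^2*y*z + 1*x*y^3*z + (-1)*x*y^2*z^2 + 1*x + (-1)*y^4 + 1*y^3*z + (-1)*y^2*z^2 + 4*y^2 + 1*y*z^3 + (-4)*y*z + (-2)"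
  using assms(1,2) unfolding x_def y_def z_def m2tr_def m2prod_def m2mul_def m2id_def
  apply simp
  by algebra

lemma tr_L:
  fixes a b c d e f g h :: complex
  assumes "a*d - b*c = 1" "e*h - f*g = 1"
  defines "x \<equiv> a+d" and "y \<equiv> e+h" and "z \<equiv> a*e+b*g+c*f+d*h"
  shows "m2tr (m2mul (m2prod [(h,-f,-g,e),(d,-b,-c,a),(h,-f,-g,e),(d,-b,-c,a),(e,f,g,h),(e,f,g,h),(a,b,c,d)]) (a,b,c,d)) - m2tr (m2mul (m2prod [(a,b,c,d),(h,-f,-g,e),(h,-f,-g,e),(d,-b,-c,a),(e,f,g,h),(e,f,g,h)]) (a,b,c,d)) = (-1)*x^3*y^2 + 1*x^3*y*z + 1*x^2*y^3*z + (-1)*x^2*y^2*z^2 + 1*x^2 + (-1)*x*y^4 + 1*x*y^3*z + (-1)*x*y^2*z^2 + 4*x*y^2 + 1*x*y*z^3 + (-5)*x*y*z + (-1)*x + 1*y^2 + 1*z^2 + (-2)"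
  using assms(1,2) unfolding x_def y_def z_def m2tr_def m2prod_def m2mul_def m2id_def
  apply simp
  by algebra

lemma tr_B:
  fixes a b c d e f g h :: complex
  assumes "a*d - b*c = 1" "e*h - f*g = 1"
  defines "x \<equiv> a+d" and "y \<equiv> e+h" and "z \<equiv> a*e+b*g+c*f+d*h"
  shows "m2tr (m2mul (m2prod [(h,-f,-g,e),(d,-b,-c,a),(h,-f,-g,e),(d,-b,-c,a),(e,f,g,h),(e,f,g,h),(a,b,c,d)]) (e,f,g,h)) - m2tr (m2mul (m2prod [(a,b,c,d),(h,-f,-g,e),(h,-f,-g,e),(d,-b,-c,a),(e,f,g,h),(e,f,g,h)]) (e,f,g,h)) = (-1)*x^2*y^3 + 1*x^2*y + 1*x*y^4*z + (-1)*x*y^2*z + 1*x*y + (-1)*y^5 + (-1)*y^3*z^2 + 5*y^3 + 1*y*z^2 + (-5)*y + (-1)*z"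
  using assms(1,2) unfolding x_def y_def z_def m2tr_def m2prod_def m2mul_def m2id_def
  apply simp
  by algebra

lemma tr_LB:
  fixes a b c d e f g h :: complex
  assumes "a*d - b*c = 1" "e*h - f*g = 1"
  defines "x \<equiv> a+d" and "y \<equiv> e+h" and "z \<equiv> a*e+b*g+c*f+d*h"
  shows "m2tr (m2mul (m2prod [(h,-f,-g,e),(d,-b,-c,a),(h,-f,-g,e),(d,-b,-c,a),(e,f,g,h),(e,f,g,h),(a,b,c,d)]) (m2mul (a,b,c,d) (e,f,g,h))) - m2tr (m2mul (m2prod [(a,b,c,d),(h,-f,-g,e),(h,-f,-g,e),(d,-b,-c,a),(e,f,g,h),(e,f,g,h)]) (m2mul (a,b,c,d) (e,f,g,h))) = (-1)*x^2*y^2*z + 1*x^2*y + 1*x*y^3*z^2 + (-1)*x*y^2*z + (-1)*y^4*z + 1*y^3 + (-1)*y^2*z^3 + 4*y^2*z + 1*y*z^2 + (-3)*y + (-1)*z"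
  using assms(1,2) unfolding x_def y_def z_def m2tr_def m2prod_def m2mul_def m2id_def
  apply simp
  by algebra

lemma trace_consequences:
  fixes x y z :: complex
  assumes "(-1)*x^2*y^2 + 1*x^2*y*z + 1*x*y^3*z + (-1)*x*y^2*z^2 + 1*x + (-1)*y^4 + 1*y^3*z + (-1)*y^2*z^2 + 4*y^2 + 1*y*z^3 + (-4)*y*z + (-2) = 0" "(-1)*x^3*y^2 + 1*x^3*y*z + 1*x^2*y^3*z + (-1)*x^2*y^2*z^2 + 1*x^2 + (-1)*x*y^4 + 1*x*y^3*z + (-1)*x*y^2*z^2 + 4*x*y^2 + 1*x*y*z^3 + (-5)*x*y*z + (-1)*x + 1*y^2 + 1*z^2 + (-2) = 0" "(-1)*x^2*y^3 + 1*x^2*y + 1*x*y^4*z + (-1)*x*y^2*z + 1*x*y + (-1)*y^5 + (-1)*y^3*z^2 + 5*y^3 + 1*y*z^2 + (-5)*y + (-1)*z = 0" "(-1)*x^2*y^2*z + 1*x^2*y + 1*x*y^3*z^2 + (-1)*x*y^2*z + (-1)*y^4*z + 1*y^3 + (-1)*y^2*z^3 + 4*y^2*z + 1*y*z^2 + (-3)*y + (-1)*z = 0"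
  shows "z = y - y*(x-2)*((x+1)*y^2-(x+2))" "(x - 2) * ((x-2)*(x+1)^2*y^4 - (x-2)*(x+2)*(x+1)*y^2 - 1) = 0"
  using assms by algebra+


lemma inv_det1: "m2det M = 1 \<Longrightarrow> m2inv M = (case M of (a,b,c,d) \<Rightarrow> (d,-b,-c,a))"
  by (cases M) (auto simp: m2inv_def m2det_def)

lemma phi_2: "phi 2 y = y" by (simp add: phi_def)
lemma Pv_2: "Pv 2 y = -1" by (simp add: Pv_def)

lemma char_in: assumes "is_rep L B" shows "char L B \<in> Rset \<union> X0set"
proof -
  obtain a b c d where L: "L = (a,b,c,d)" by (cases L) auto
  obtain e f g h where B: "B = (e,f,g,h)" by (cases B) auto
  have dL: "a*d - b*c = 1" and dB: "e*h - f*g = 1" using assms L B by (auto simp: is_rep_def m2det_def)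
  have iL: "m2inv L = (d,-b,-c,a)" using inv_det1[of L] dL L by (simp add: m2det_def)
  have iB: "m2inv B = (h,-f,-g,e)" using inv_det1[of B] dB B by (simp add: m2det_def)
  have rel: "m2prod [(h,-f,-g,e),(d,-b,-c,a),(h,-f,-g,e),(d,-b,-c,a),(e,f,g,h),(e,f,g,h),(a,b,c,d)] = m2prod [(a,b,c,d),(h,-f,-g,e),(h,-f,-g,e),(d,-b,-c,a),(e,f,g,h),(e,f,g,h)]"
    using assms unfolding is_rep_def iL iB by (simp add: L B)
  define x where "x = a+d" define y where "y = e+h" define z where "z = a*e+b*g+c*f+d*h"
  note t1 = tr_I[OF dL dB, folded x_def y_def z_def, unfolded rel diff_self]
  note t2 = tr_L[OF dL dB, folded x_def y_def z_def, unfolded rel diff_self]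
  note t3 = tr_B[OF dL dB, folded x_def y_def z_def, unfolded rel diff_self]
  note t4 = tr_LB[OF dL dB, folded x_def y_def z_def, unfolded rel diff_self]
  have zc: "z = phi x y" and pc: "(x - 2) * Pv x y = 0"
    using trace_consequences[OF t1[symmetric] t2[symmetric] t3[symmetric] t4[symmetric]]
    unfolding phi_def Pv_def by auto
  have ch: "char L B = (x, y, z)" unfolding char_def L B x_def y_def z_def
    by (simp add: m2tr_def m2mul_def algebra_simps)
  show ?thesis
  proof (cases "x = 2")
    case True then show ?thesis using ch zc phi_2 by (simp add: Rset_def)
  next
    case False then have "Pv x y = 0" using pc by simp
    then show ?thesis using ch zc by (simp add: X0set_def)
  qed
qed


lemma R_sub: "Rset \<subseteq> charvar"
proof
  fix p assume "p \<in> Rset"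
  then obtain t where p: "p = (2, t, t)" by (auto simp: Rset_def)
  let ?B = "(t, -1, 1, 0) :: m2"
  have "is_rep m2id ?B"
    unfolding is_rep_def m2prod_def m2mul_def m2id_def m2inv_def m2det_def by simp
  moreover have "char m2id ?B = p" unfolding p char_def m2tr_def m2mul_def m2id_def by simp
  ultimately show "p \<in> charvar" unfolding charvar_def by blast
qed

lemma rel_X0:
  fixes s t f g w :: complex assumes
 "(s-2)*(s+1)^2*t^4 - (s-2)*(s+2)*(s+1)*t^2 - 1 = 0"
 "w = t - t*(s-2)*((s+1)*t^2-(s+2))" "f*g = -1" "f - g = w"
shows "m2prod [(t,-f,-g,0),(0,1,-1,s),(t,-f,-g,0),(0,1,-1,s),(0,f,g,t),(0,f,g,t),(s,-1,1,0)]
     = m2prod [(s,-1,1,0),(t,-f,-g,0),(t,-f,-g,0),(0,1,-1,s),(0,f,g,t),(0,f,g,t)]"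
  unfolding m2prod_def m2mul_def m2id_def
  apply (simp add: algebra_simps)
  apply (intro conjI)
  using assms by algebra+

lemma X0_sub: "X0set \<subseteq> charvar"
proof
  fix p assume "p \<in> X0set"
  then obtain s t where p: "p = (s, t, phi s t)" and P: "Pv s t = 0" by (auto simp: X0set_def)
  define w where "w = phi s t"
  define f where "f = (w + csqrt (w^2 - 4)) / 2"
  define g where "g = f - w"
  have "(csqrt (w^2 - 4))^2 = w^2 - 4" by simp
  then have fg: "f * g = -1" unfolding g_def f_def by (simp add: field_simps power2_eq_square)
  let ?L = "(s, -1, 1, 0) :: m2" and ?B = "(0, f, g, t) :: m2"
  have dL: "m2det ?L = 1" by (simp add: m2det_def)
  have dB: "m2det ?B = 1" using fg by (simp add: m2det_def)
  have iL: "m2inv ?L = (0,1,-1,s)" using inv_det1[OF dL] by simp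
  have iB: "m2inv ?B = (t,-f,-g,0)" using inv_det1[OF dB] by simp
  have P': "(s-2)*(s+1)^2*t^4 - (s-2)*(s+2)*(s+1)*t^2 - 1 = 0" using P unfolding Pv_def .
  have weq: "w = t - t*(s-2)*((s+1)*t^2-(s+2))" unfolding w_def phi_def ..
  have fmg: "f - g = w" unfolding g_def by simp
  have "is_rep ?L ?B"
    unfolding is_rep_def iL iB using dL dB rel_X0[OF P' weq fg fmg] by simp
  moreover have "char ?L ?B = p" unfolding p char_def m2tr_def m2mul_def w_def[symmetric] g_def by simp
  ultimately show "p \<in> charvar" unfolding charvar_def by blast
qed

lemma charvar_eq: "charvar = Rset \<union> X0set"
  using R_sub X0_sub char_in unfolding charvar_def by blast

lemma R_X0_disj: "Rset \<inter> X0set = {}"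
  by (auto simp: Rset_def X0set_def Pv_2)


definition sc :: "complex \<Rightarrow> complex \<times> complex \<Rightarrow> complex \<times> complex" where
  "sc c v = (c * fst v, c * snd v)"

lemma app_mul: "m2app (m2mul M N) v = m2app M (m2app N v)"
  by (cases M, cases N, cases v) (simp add: m2app_def m2mul_def algebra_simps)
lemma app_id: "m2app m2id v = v"
  by (cases v) (simp add: m2app_def m2id_def)
lemma app_sc: "m2app M (sc k v) = sc k (m2app M v)"
  by (cases M, cases v) (simp add: m2app_def sc_def algebra_simps)
lemma sc_sc: "sc a (sc b v) = sc (b * a) v"
  by (simp add: sc_def algebra_simps)
lemma det_mul: "m2det (m2mul M N) = m2det M * m2det N"
  by (cases M, cases N) (simp add: m2det_def m2mul_def algebra_simps)
lemma det_inv: "m2det M = 1 \<Longrightarrow> m2det (m2inv M) = 1"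
  by (cases M) (simp add: m2det_def m2inv_def algebra_simps)

lemma inv_eig:
  assumes d: "m2det M = 1" and v: "v \<noteq> (0,0)" and e: "m2app M v = sc c v"
  shows "c \<noteq> 0 \<and> m2app (m2inv M) v = sc (1/c) v"
proof -
  obtain a b cc dd where M: "M = (a,b,cc,dd)" by (cases M) auto
  obtain x y where V: "v = (x,y)" by (cases v) auto
  have d1: "a*dd - b*cc = 1" using d M by (simp add: m2det_def)
  have e1: "a*x + b*y = c*x" "cc*x + dd*y = c*y" using e M V by (auto simp: m2app_def sc_def)
  have k1: "c*(dd*x - b*y) = x" using d1 e1 by algebra
  have k2: "c*(-cc*x + a*y) = y" using d1 e1 by algebra
  have cnz: "c \<noteq> 0"
  proof
    assume "c = 0"
    then have "x = 0" "y = 0" using k1 k2 by simp_all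
    then show False using v V by simp
  qed
  have "m2inv M = (dd,-b,-cc,a)" using inv_det1[OF d] M by simp
  then have "m2app (m2inv M) v = (dd*x - b*y, -cc*x + a*y)" using V by (simp add: m2app_def)
  also have "\<dots> = (x/c, y/c)" using k1 k2 cnz by (simp add: eq_divide_eq mult.commute)
  also have "\<dots> = sc (1/c) v" using V by (simp add: sc_def)
  finally show ?thesis using cnz by simp
qed

lemma app_prod_eig:
  "list_all2 (\<lambda>M c. m2app M v = sc c v) Ms cs \<Longrightarrow> m2app (m2prod Ms) v = sc (prod_list cs) v"
proof (induct Ms arbitrary: cs)
  case Nil then show ?case by (simp add: m2prod_def app_id sc_def)
next
  case (Cons M Ms)
  then obtain c cs' where cs: "cs = c # cs'" and h: "m2app M v = sc c v" and t: "list_all2 (\<lambda>M c. m2app M v = sc c v) Ms cs'"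
    by (cases cs) auto
  have "m2app (m2prod (M # Ms)) v = m2app M (m2app (m2prod Ms) v)" by (simp add: m2prod_def app_mul)
  also have "\<dots> = m2app M (sc (prod_list cs') v)" using Cons(1)[OF t] by simp
  also have "\<dots> = sc (prod_list cs) v" using h cs by (simp add: app_sc sc_sc mult.commute)
  finally show ?case .
qed

lemma invariant_all:
  assumes dL: "m2det L = 1" and dB: "m2det B = 1" and v: "v \<noteq> (0,0)"
    and eL: "m2app L v = sc c1 v" and eB: "m2app B v = sc c2 v"
  shows "M \<in> rep_image L B \<Longrightarrow> m2det M = 1 \<and> (\<exists>c. m2app M v = sc c v)"
proof (induct rule: rep_image.induct)
  case ri_id
  have "m2app m2id v = sc 1 v" by (simp add: app_id sc_def)
  moreover have "m2det m2id = 1" by (simp add: m2det_def m2id_def)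
  ultimately show ?case by blast
next
  case ri_L then show ?case using dL eL by blast
next
  case ri_B then show ?case using dB eB by blast
next
  case (ri_mul M N)
  then obtain a b where "m2app M v = sc a v" "m2app N v = sc b v" by blast
  then have "m2app (m2mul M N) v = sc (a * b) v" by (simp add: app_mul app_sc sc_sc)
  moreover have "m2det (m2mul M N) = 1" using ri_mul by (simp add: det_mul)
  ultimately show ?case by blast
next
  case (ri_inv M)
  then obtain a where "m2app M v = sc a v" by blast
  then have "m2app (m2inv M) v = sc (1/a) v" using inv_eig ri_inv v by blast
  then show ?case using ri_inv det_inv by blast
qed

lemma not_irred_of_common:
  assumes "m2det L = 1" "m2det B = 1" "v \<noteq> (0,0)"
    "m2app L v = sc c1 v" "m2app B v = sc c2 v"
  shows "\<not> irred_rep L B"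
proof -
  have "\<forall>M\<in>rep_image L B. \<exists>c. m2app M v = (c * fst v, c * snd v)"
    using invariant_all[OF assms] unfolding sc_def by blast
  then show ?thesis unfolding irred_rep_def using assms(3) by blast
qed


lemma irred_of_X0:
  assumes rep: "is_rep L B" and X: "char L B \<in> X0set"
  shows "irred_rep L B"
proof (rule ccontr)
  assume "\<not> irred_rep L B"
  then obtain v where v: "v \<noteq> (0,0)" and inv: "\<forall>M\<in>rep_image L B. \<exists>c. m2app M v = (c * fst v, c * snd v)"
    unfolding irred_rep_def by blast
  have dL: "m2det L = 1" and dB: "m2det B = 1" using rep is_rep_def by auto
  obtain c1 where e1: "m2app L v = sc c1 v" using inv rep_image.ri_L unfolding sc_def by blast
  obtain c2 where e2: "m2app B v = sc c2 v" using inv rep_image.ri_B unfolding sc_def by blast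
  from inv_eig[OF dL v e1] have c1: "c1 \<noteq> 0" and i1: "m2app (m2inv L) v = sc (1/c1) v" by auto
  from inv_eig[OF dB v e2] have c2: "c2 \<noteq> 0" and i2: "m2app (m2inv B) v = sc (1/c2) v" by auto
  have rel: "m2prod [m2inv B, m2inv L, m2inv B, m2inv L, B, B, L] = m2prod [L, m2inv B, m2inv B, m2inv L, B, B]"
    using rep is_rep_def by auto
  have a1: "m2app (m2prod [m2inv B, m2inv L, m2inv B, m2inv L, B, B, L]) v = sc (prod_list [1/c2, 1/c1, 1/c2, 1/c1, c2, c2, c1]) v"
    by (rule app_prod_eig) (simp add: e1 e2 i1 i2)
  have a2: "m2app (m2prod [L, m2inv B, m2inv B, m2inv L, B, B]) v = sc (prod_list [c1, 1/c2, 1/c2, 1/c1, c2, c2]) v"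
    by (rule app_prod_eig) (simp add: e1 e2 i1 i2)
  have p1: "prod_list [1/c2, 1/c1, 1/c2, 1/c1, c2, c2, c1] = 1/c1" using c1 c2 by (simp add: field_simps)
  have p2: "prod_list [c1, 1/c2, 1/c2, 1/c1, c2, c2] = 1" using c1 c2 by (simp add: field_simps)
  have scq: "sc (1/c1) v = sc 1 v" using a1 a2 rel p1 p2 by simp
  obtain x y where V: "v = (x,y)" by (cases v) auto
  have "c1 = 1"
  proof (cases "x = 0")
    case True
    then have "y \<noteq> 0" using v V by simp
    moreover have "(1/c1) * y = y" using scq V by (simp add: sc_def)
    ultimately show ?thesis using c1 by (simp add: field_simps)
  next
    case False
    moreover have "(1/c1) * x = x" using scq V by (simp add: sc_def)
    ultimately show ?thesis using c1 by (simp add: field_simps)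
  qed
  obtain a b cc d where L: "L = (a,b,cc,d)" by (cases L) auto
  have dL': "a*d - b*cc = 1" using dL L by (simp add: m2det_def)
  have ev: "a*x + b*y = x" "cc*x + d*y = y" using e1 \<open>c1 = 1\<close> L V by (auto simp: m2app_def sc_def)
  have k1: "(2 - (a+d)) * x = 0" using dL' ev by algebra
  have k2: "(2 - (a+d)) * y = 0" using dL' ev by algebra
  have "a + d = 2" using k1 k2 v V by auto
  then have "m2tr L = 2" using L by (simp add: m2tr_def)
  then have "Pv 2 (m2tr B) = 0" using X by (simp add: char_def X0set_def)
  then show False by (simp add: Pv_2)
qed

lemma red_of_R:
  assumes dL: "m2det L = 1" and dB: "m2det B = 1" and tL: "m2tr L = 2" and tLB: "m2tr (m2mul L B) = m2tr B"
  shows "\<not> irred_rep L B"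
proof -
  obtain a b c d where L: "L = (a,b,c,d)" by (cases L) auto
  obtain e f g h where B: "B = (e,f,g,h)" by (cases B) auto
  have dL': "a*d - b*c = 1" using dL L by (simp add: m2det_def)
  have dB': "e*h - f*g = 1" using dB B by (simp add: m2det_def)
  have tL': "a + d = 2" using tL L by (simp add: m2tr_def)
  have tLB': "a*e + b*g + c*f + d*h = e + h" using tLB L B by (simp add: m2tr_def m2mul_def add.assoc)
  show ?thesis
  proof (cases "b = 0")
    case False
    let ?v = "(b, 1 - a)"
    define c2 where "c2 = (e*b + f*(1-a))/b"
    have v: "?v \<noteq> (0,0)" using False by simp
    have l2: "c*b + d*(1-a) = 1 - a" using dL' tL' by algebra
    have eL: "m2app L ?v = sc 1 ?v" using L l2 by (simp add: m2app_def sc_def algebra_simps)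
    have key: "b*(g*b + h*(1-a)) = (e*b + f*(1-a))*(1-a)" using dL' tL' tLB' by algebra
    have s1: "c2 * b = e*b + f*(1-a)" using False unfolding c2_def by (simp add: field_simps)
    have s2: "c2 * (1-a) = g*b + h*(1-a)" using False key unfolding c2_def by (simp add: field_simps)
    have eB: "m2app B ?v = sc c2 ?v" using B s1 s2 by (simp add: m2app_def sc_def algebra_simps)
    show ?thesis by (rule not_irred_of_common[OF dL dB v eL eB])
  next
    case b0: True
    have a1: "a = 1" using dL' tL' b0 by algebra
    have d1: "d = 1" using a1 tL' by simp
    show ?thesis
    proof (cases "c = 0")
      case False
      have "c * f = 0" using tLB' a1 d1 b0 by simp
      then have f0: "f = 0" using False by simp
      let ?v = "(0::complex, 1::complex)"
      have eL: "m2app L ?v = sc 1 ?v" using L b0 d1 by (simp add: m2app_def sc_def)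
      have eB: "m2app B ?v = sc h ?v" using B f0 by (simp add: m2app_def sc_def)
      show ?thesis by (rule not_irred_of_common[OF dL dB _ eL eB]) simp
    next
      case c0: True
      have Lv: "m2app L v = sc 1 v" for v using L a1 d1 b0 c0 by (cases v) (simp add: m2app_def sc_def)
      show ?thesis
      proof (cases "f = 0")
        case True
        let ?v = "(0::complex, 1::complex)"
        have eB: "m2app B ?v = sc h ?v" using B True by (simp add: m2app_def sc_def)
        show ?thesis by (rule not_irred_of_common[OF dL dB _ Lv eB]) simp
      next
        case False
        define r where "r = csqrt ((e+h)^2 - 4)"
        have rr: "r^2 = (e+h)^2 - 4" unfolding r_def by simp
        define lam where "lam = (e + h + r)/2"
        have lam2: "2*lam = e + h + r" unfolding lam_def by simp
        have lq: "lam^2 - (e+h)*lam + 1 = 0" using lam2 rr by algebra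
        let ?v = "(f, lam - e)"
        have s2: "g*f + h*(lam - e) = lam*(lam - e)" using lq dB' by algebra
        have eB: "m2app B ?v = sc lam ?v" using B s2 by (simp add: m2app_def sc_def algebra_simps)
        show ?thesis by (rule not_irred_of_common[OF dL dB _ Lv eB]) (simp add: False)
      qed
    qed
  qed
qed


lemma irr_comp_X0: "irr_comp3 charvar X0set"
  unfolding irr_comp3_def
proof (intro conjI allI impI)
  show "X0set \<subseteq> charvar" by (rule X0_sub)
  show "zirr3 X0set" by (rule zirr_X0)
  fix Z assume Zc: "Z \<subseteq> charvar" and Zi: "zirr3 Z" and XZ: "X0set \<subseteq> Z"
  have "Z \<subseteq> Rset \<union> X0set" using Zc charvar_eq by simp
  then have "Z \<subseteq> Rset \<or> Z \<subseteq> X0set" using Zi zclosed_R zclosed_X0 unfolding zirr3_def by blast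
  moreover have "\<not> Z \<subseteq> Rset" using XZ X0_ne R_X0_disj by blast
  ultimately show "Z = X0set" using XZ by blast
qed

lemma exists_irred: "\<exists>L B. is_rep L B \<and> irred_rep L B \<and> char L B \<in> X0set"
proof -
  have "(-2, t0, phi (-2) t0) \<in> charvar" using X0_ne X0_sub by blast
  then obtain L B where "is_rep L B" "char L B = (-2, t0, phi (-2) t0)" unfolding charvar_def by force
  then show ?thesis using irred_of_X0 X0_ne by metis
qed

lemma unique_comp:
  assumes Y: "irr_comp3 charvar Y" and ex: "\<exists>L B. is_rep L B \<and> irred_rep L B \<and> char L B \<in> Y"
  shows "Y = X0set"
proof -
  obtain L B where rep: "is_rep L B" and irr: "irred_rep L B" and cY: "char L B \<in> Y" using ex by blast
  have Yc: "Y \<subseteq> charvar" and Yi: "zirr3 Y" and Ymax: "\<And>Z. Z \<subseteq> charvar \<Longrightarrow> zirr3 Z \<Longrightarrow> Y \<subseteq> Z \<Longrightarrow> Z = Y"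
    using Y unfolding irr_comp3_def by auto
  have "Y \<subseteq> Rset \<union> X0set" using Yc charvar_eq by simp
  then have "Y \<subseteq> Rset \<or> Y \<subseteq> X0set" using Yi zclosed_R zclosed_X0 unfolding zirr3_def by blast
  moreover have "\<not> Y \<subseteq> Rset"
  proof
    assume "Y \<subseteq> Rset"
    then have "char L B \<in> Rset" using cY by blast
    then have t: "m2tr L = 2" "m2tr (m2mul L B) = m2tr B" by (auto simp: char_def Rset_def)
    have "m2det L = 1" "m2det B = 1" using rep is_rep_def by auto
    then show False using red_of_R t irr by blast
  qed
  ultimately have "Y \<subseteq> X0set" by blast
  then show "Y = X0set" using Ymax[OF X0_sub zirr_X0] by simp
qed

lemma phi_formula:
  assumes "Pv s t = 0"
  shows "t*(s+1) \<noteq> 0 \<and> phi s t = t - 1/(t*(s+1))"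
proof -
  have nz: "t*(s+1) \<noteq> 0"
  proof
    assume "t*(s+1) = 0"
    then have "Pv s t = -1" unfolding Pv_def by algebra
    then show False using assms by simp
  qed
  have "(t - phi s t) * (t*(s+1)) = 1" using assms unfolding Pv_def phi_def by algebra
  then have "t - phi s t = 1/(t*(s+1))" using nz by (simp add: eq_divide_eq)
  then have "phi s t = t - 1/(t*(s+1))" by (simp add: algebra_simps)
  then show ?thesis using nz by simp
qed

lemma tr_inv: "m2det M = 1 \<Longrightarrow> m2tr (m2inv M) = m2tr M"
  by (cases M) (simp add: inv_det1 m2tr_def add.commute)

theorem lemma1:
  shows "m137_poly = m137_poly_alt \<and> irreducible m137_poly \<and>
    (\<exists>!X0. irr_comp3 charvar X0 \<and> (\<exists>L B. is_rep L B \<and> irred_rep L B \<and> char L B \<in> X0)) \<and>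
    (\<forall>X0. irr_comp3 charvar X0 \<and> (\<exists>L B. is_rep L B \<and> irred_rep L B \<and> char L B \<in> X0) \<longrightarrow>
       inj_on (\<lambda>(x, y, z). (x, y)) X0 \<and>
       (\<lambda>(x, y, z). (x, y)) ` X0 = {(s, t). peval2 m137_poly s t = 0} \<and>
       (\<forall>L B. is_rep L B \<and> char L B \<in> X0 \<longrightarrow>
          (let s = m2tr L; t = m2tr B in
             t * (s + 1) \<noteq> 0 \<and>
             m2tr (m2mul L B) = t - 1 / (t * (s + 1)) \<and>
             m2tr (m2inv (m2mul L B)) = t - 1 / (t * (s + 1)))))"
proof (intro conjI)
  show "m137_poly = m137_poly_alt" by (rule poly_eq_alt)
  show "irreducible m137_poly" by (rule irreducible_P)
  show "\<exists>!X0. irr_comp3 charvar X0 \<and> (\<exists>L B. is_rep L B \<and> irred_rep L B \<and> char L B \<in> X0)"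
    using irr_comp_X0 exists_irred unique_comp by blast
  show "\<forall>X0. irr_comp3 charvar X0 \<and> (\<exists>L B. is_rep L B \<and> irred_rep L B \<and> char L B \<in> X0) \<longrightarrow>
       inj_on (\<lambda>(x, y, z). (x, y)) X0 \<and>
       (\<lambda>(x, y, z). (x, y)) ` X0 = {(s, t). peval2 m137_poly s t = 0} \<and>
       (\<forall>L B. is_rep L B \<and> char L B \<in> X0 \<longrightarrow>
          (let s = m2tr L; t = m2tr B in
             t * (s + 1) \<noteq> 0 \<and>
             m2tr (m2mul L B) = t - 1 / (t * (s + 1)) \<and>
             m2tr (m2inv (m2mul L B)) = t - 1 / (t * (s + 1))))"
  proof (intro allI impI)
    fix Y assume "irr_comp3 charvar Y \<and> (\<exists>L B. is_rep L B \<and> irred_rep L B \<and> char L B \<in> Y)"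
    then have YX: "Y = X0set" using unique_comp by blast
    have inj: "inj_on (\<lambda>(x, y, z). (x, y)) X0set" by (auto simp: inj_on_def X0set_def)
    have img: "(\<lambda>(x, y, z). (x, y)) ` X0set = {(s, t). peval2 m137_poly s t = 0}"
    proof
      show "(\<lambda>(x, y, z). (x, y)) ` X0set \<subseteq> {(s, t). peval2 m137_poly s t = 0}"
        by (auto simp: X0set_def peval2_m137)
      show "{(s, t). peval2 m137_poly s t = 0} \<subseteq> (\<lambda>(x, y, z). (x, y)) ` X0set"
      proof
        fix p assume "p \<in> {(s, t). peval2 m137_poly s t = 0}"
        then obtain s t where p: "p = (s,t)" and P: "Pv s t = 0" by (auto simp: peval2_m137)
        have "(s, t, phi s t) \<in> X0set" using P by (simp add: X0set_def)
        then show "p \<in> (\<lambda>(x, y, z). (x, y)) ` X0set" unfolding p by (rule rev_image_eqI) simp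
      qed
    qed
    have reps: "\<forall>L B. is_rep L B \<and> char L B \<in> X0set \<longrightarrow>
          (let s = m2tr L; t = m2tr B in
             t * (s + 1) \<noteq> 0 \<and>
             m2tr (m2mul L B) = t - 1 / (t * (s + 1)) \<and>
             m2tr (m2inv (m2mul L B)) = t - 1 / (t * (s + 1)))"
    proof (intro allI impI)
      fix L B assume a: "is_rep L B \<and> char L B \<in> X0set"
      have P: "Pv (m2tr L) (m2tr B) = 0" and w: "m2tr (m2mul L B) = phi (m2tr L) (m2tr B)"
        using a by (auto simp: char_def X0set_def)
      have "m2det (m2mul L B) = 1" using a by (simp add: det_mul is_rep_def)
      then have "m2tr (m2inv (m2mul L B)) = m2tr (m2mul L B)" by (rule tr_inv)
      then show "let s = m2tr L; t = m2tr B in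
             t * (s + 1) \<noteq> 0 \<and>
             m2tr (m2mul L B) = t - 1 / (t * (s + 1)) \<and>
             m2tr (m2inv (m2mul L B)) = t - 1 / (t * (s + 1))"
        using phi_formula[OF P] w by (simp add: Let_def)
    qed
    show "inj_on (\<lambda>(x, y, z). (x, y)) Y \<and>
       (\<lambda>(x, y, z). (x, y)) ` Y = {(s, t). peval2 m137_poly s t = 0} \<and>
       (\<forall>L B. is_rep L B \<and> char L B \<in> Y \<longrightarrow>
          (let s = m2tr L; t = m2tr B in
             t * (s + 1) \<noteq> 0 \<and>
             m2tr (m2mul L B) = t - 1 / (t * (s + 1)) \<and>
             m2tr (m2inv (m2mul L B)) = t - 1 / (t * (s + 1))))"
      using inj img reps YX by simp
  qed
qed


end
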